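(* Let $K$ be a field, $m\ge2$, $d_1,\ldots,d_m$ positive integers, $S=K[x_1,\ldots,x_m,y_1,\ldots,y_m]$, and for $1\le i<j\le m$ let $f_{ij}=x_i^{d_i}y_j^{d_j}-x_j^{d_j}y_i^{d_i}$. Let $J_L\subset S$ be the ideal generated by $f_{12},f_{13},\ldots,f_{1m}$. Then $\mathcal{R}=\{f_{12},\ldots,f_{1m}\}\cup\{g_{ij}:=y_1^{d_1}f_{ij}:2\le i<j\le m\}$ is a Gröbner basis of $J_L$ with respect to the lexicographic term order induced by $x_1\succ x_2\succ\cdots\succ x_m\succ y_1\succ\cdots\succ y_m$.
   Context: $J_L$ is the lattice basis ideal of the lattice $L\subset\mathbb{Z}^{2m}$ with $I_L=I_2(D)$, for the basis consisting of the exponent vectors of $f_{12},\ldots,f_{1m}$. *)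

theory Defs
  imports "HOL-Library.Poly_Mapping"
begin

text \<open>For fixed m, the ring S = K[x_1..x_m,y_1..y_m] is encoded with x_i as variable
  i-1 and y_i as variable m+i-1, i.e. S uses exactly the variables 0..2m-1.\<close>

type_synonym monom = "nat \<Rightarrow>\<^sub>0 nat"
type_synonym 'a mpoly = "monom \<Rightarrow>\<^sub>0 'a"

definition xvar :: "nat \<Rightarrow> nat \<Rightarrow> nat" where "xvar m i = i - 1"
definition yvar :: "nat \<Rightarrow> nat \<Rightarrow> nat" where "yvar m i = m + i - 1"

definition polyring :: "nat \<Rightarrow> ('a::field) mpoly set" where
  "polyring m = {p. \<forall>a\<in>Poly_Mapping.keys p. Poly_Mapping.keys a \<subseteq> {..<2*m} }"

definition ideal_gen :: "nat \<Rightarrow> ('a::field) mpoly set \<Rightarrow> 'a mpoly set" where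
  "ideal_gen m G = {p. \<exists>F c. finite F \<and> F \<subseteq> G \<and> (\<forall>g\<in>F. c g \<in> polyring m)
                          \<and> p = (\<Sum>g\<in>F. c g * g)}"

text \<open>Term order: the library linear order on monomials is lexicographic,
  comparing exponents at the least index where they differ, so variable 0 is the most
  significant: x_1 > x_2 > ... > x_m > y_1 > ... > y_m.\<close>

definition lead_monom :: "('a::zero) mpoly \<Rightarrow> monom" where
  "lead_monom p = Max (Poly_Mapping.keys p)"

definition init_term :: "('a::field) mpoly \<Rightarrow> 'a mpoly" where
  "init_term p = Poly_Mapping.single (lead_monom p) 1"

definition is_groebner_basis :: "nat \<Rightarrow> ('a::field) mpoly set \<Rightarrow> 'a mpoly set \<Rightarrow> bool" where
  "is_groebner_basis m G I \<longleftrightarrow> G \<subseteq> I \<and>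
     ideal_gen m (init_term ` (G - {0})) = ideal_gen m (init_term ` (I - {0}))"

definition xy_mon :: "nat \<Rightarrow> nat \<Rightarrow> nat \<Rightarrow> nat \<Rightarrow> nat \<Rightarrow> ('a::field) mpoly" where
  "xy_mon m i a j b = Poly_Mapping.single
      (Poly_Mapping.single (xvar m i) a + Poly_Mapping.single (yvar m j) b) 1"

definition y_pow :: "nat \<Rightarrow> nat \<Rightarrow> nat \<Rightarrow> ('a::field) mpoly" where
  "y_pow m j b = Poly_Mapping.single (Poly_Mapping.single (yvar m j) b) 1"

definition fbin :: "nat \<Rightarrow> (nat \<Rightarrow> nat) \<Rightarrow> nat \<Rightarrow> nat \<Rightarrow> ('a::field) mpoly" where
  "fbin m d i j = xy_mon m i (d i) j (d j) - xy_mon m j (d j) i (d i)"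

end

theory Submission
  imports Defs
begin


lemma polyring_0: "0 \<in> polyring m"
  by (simp add: polyring_def)

lemma polyring_add: "p \<in> polyring m \<Longrightarrow> q \<in> polyring m \<Longrightarrow> p + q \<in> polyring m"
proof -
  assume asm: "p \<in> polyring m" "q \<in> polyring m"
  have "Poly_Mapping.keys a \<subseteq> {..<2*m}" if "a \<in> Poly_Mapping.keys (p + q)" for a
  proof -
    have "a \<in> Poly_Mapping.keys p \<or> a \<in> Poly_Mapping.keys q" using that keys_add[of p q] by (auto simp del: keys_add)
    then show ?thesis using asm by (auto simp: polyring_def)
  qed
  then show ?thesis by (simp add: polyring_def)
qed

lemma polyring_uminus: "p \<in> polyring m \<Longrightarrow> - p \<in> polyring m"
  unfolding polyring_def by simp

lemma keys_add_monom: "Poly_Mapping.keys ((a::monom) + b) = Poly_Mapping.keys a \<union> Poly_Mapping.keys b"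
  by (auto simp: in_keys_iff lookup_add)

lemma polyring_mult:
  assumes "p \<in> polyring m" "q \<in> polyring m" shows "p * q \<in> polyring m"
proof -
  have p: "\<forall>a\<in>Poly_Mapping.keys p. Poly_Mapping.keys a \<subseteq> {..<2 * m}"
    and q: "\<forall>a\<in>Poly_Mapping.keys q. Poly_Mapping.keys a \<subseteq> {..<2 * m}"
    using assms by (auto simp: polyring_def)
  have "Poly_Mapping.keys a \<subseteq> {..<2*m}" if a: "a \<in> Poly_Mapping.keys (p * q)" for a
  proof -
    from a keys_mult obtain b c where "a = b + c" "b \<in> Poly_Mapping.keys p" "c \<in> Poly_Mapping.keys q" by blast
    with p q show ?thesis by (auto simp: keys_add_monom)
  qed
  then show ?thesis by (simp add: polyring_def)
qed

lemma polyring_single: "Poly_Mapping.keys h \<subseteq> {..<2*m} \<Longrightarrow> Poly_Mapping.single h c \<in> polyring m"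
  by (simp add: polyring_def)

lemma polyring_sum: "finite F \<Longrightarrow> (\<And>g. g \<in> F \<Longrightarrow> t g \<in> polyring m) \<Longrightarrow> sum t F \<in> polyring m"
  by (induction F rule: finite_induct) (auto intro: polyring_0 polyring_add)

lemma ideal_gen_0: "0 \<in> ideal_gen m G"
  unfolding ideal_gen_def by (rule CollectI, rule exI[of _ "{}"]) simp

lemma ideal_gen_add:
  assumes "p \<in> ideal_gen m G" "q \<in> ideal_gen m G"
  shows "p + q \<in> ideal_gen m G"
proof -
  from assms(1) obtain F1 c1 where 1: "finite F1" "F1 \<subseteq> G" "\<forall>g\<in>F1. c1 g \<in> polyring m" "p = (\<Sum>g\<in>F1. c1 g * g)"
    unfolding ideal_gen_def by blast
  from assms(2) obtain F2 c2 where 2: "finite F2" "F2 \<subseteq> G" "\<forall>g\<in>F2. c2 g \<in> polyring m" "q = (\<Sum>g\<in>F2. c2 g * g)"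
    unfolding ideal_gen_def by blast
  define c where "c g = (if g \<in> F1 then c1 g else 0) + (if g \<in> F2 then c2 g else 0)" for g
  have "(\<Sum>g\<in>F1 \<union> F2. c g * g) = (\<Sum>g\<in>F1 \<union> F2. (if g \<in> F1 then c1 g * g else 0)) + (\<Sum>g\<in>F1 \<union> F2. (if g \<in> F2 then c2 g * g else 0))"
    unfolding c_def sum.distrib[symmetric] by (rule sum.cong) (auto simp: distrib_right)
  also have "\<dots> = p + q"
    using 1 2 by (simp add: sum.If_cases Int_absorb1)
  finally have "p + q = (\<Sum>g\<in>F1 \<union> F2. c g * g)" by simp
  moreover have "\<forall>g\<in>F1 \<union> F2. c g \<in> polyring m"
    using 1 2 by (auto simp: c_def intro!: polyring_add polyring_0)
  ultimately show ?thesis unfolding ideal_gen_def mem_Collect_eq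
    by (intro exI[of _ "F1 \<union> F2"] exI[of _ c]) (use 1 2 in auto)
qed

lemma ideal_gen_mult:
  assumes "p \<in> ideal_gen m G" "c \<in> polyring m"
  shows "c * p \<in> ideal_gen m G"
proof -
  from assms(1) obtain F1 c1 where 1: "finite F1" "F1 \<subseteq> G" "\<forall>g\<in>F1. c1 g \<in> polyring m" "p = (\<Sum>g\<in>F1. c1 g * g)"
    unfolding ideal_gen_def by blast
  have "c * p = (\<Sum>g\<in>F1. (c * c1 g) * g)" using 1 by (simp add: sum_distrib_left mult.assoc)
  moreover have "\<forall>g\<in>F1. c * c1 g \<in> polyring m" using 1 assms(2) by (auto intro: polyring_mult)
  ultimately show ?thesis unfolding ideal_gen_def mem_Collect_eq
    by (intro exI[of _ F1] exI[of _ "\<lambda>g. c * c1 g"]) (use 1 in auto)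
qed

lemma ideal_gen_base:
  assumes "g \<in> G" "c \<in> polyring m"
  shows "c * g \<in> ideal_gen m G"
  unfolding ideal_gen_def using assms
  by (intro CollectI exI[of _ "{g}"] exI[of _ "\<lambda>_. c"]) auto

lemma ideal_gen_sum: "finite F \<Longrightarrow> (\<And>g. g \<in> F \<Longrightarrow> t g \<in> ideal_gen m G) \<Longrightarrow> sum t F \<in> ideal_gen m G"
  by (induction F rule: finite_induct) (auto intro: ideal_gen_0 ideal_gen_add)

lemma ideal_gen_mono: "X \<subseteq> Y \<Longrightarrow> ideal_gen m X \<subseteq> ideal_gen m Y"
  unfolding ideal_gen_def by blast

lemma ideal_gen_trans:
  assumes "X \<subseteq> ideal_gen m Y"
  shows "ideal_gen m X \<subseteq> ideal_gen m Y"
proof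
  fix p assume "p \<in> ideal_gen m X"
  then obtain F c where 1: "finite F" "F \<subseteq> X" "\<forall>g\<in>F. c g \<in> polyring m" "p = (\<Sum>g\<in>F. c g * g)"
    unfolding ideal_gen_def by blast
  show "p \<in> ideal_gen m Y" unfolding 1(4)
    using 1 assms by (intro ideal_gen_sum ideal_gen_mult) auto
qed

lemma ideal_gen_polyring:
  assumes "G \<subseteq> polyring m"
  shows "ideal_gen m G \<subseteq> polyring m"
  unfolding ideal_gen_def using assms by (auto intro!: polyring_sum polyring_mult)




definition phi :: "(monom \<Rightarrow> monom) \<Rightarrow> monom \<Rightarrow> ('a::field) mpoly \<Rightarrow> 'a" where
  "phi N v p = (\<Sum>a\<in>Poly_Mapping.keys p. if N a = v then Poly_Mapping.lookup p a else 0)"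

lemma phi_superset:
  assumes "finite A" "Poly_Mapping.keys p \<subseteq> A"
  shows "phi N v p = (\<Sum>a\<in>A. if N a = v then Poly_Mapping.lookup p a else 0)"
  unfolding phi_def using assms
  by (intro sum.mono_neutral_left) (auto simp: in_keys_iff)

lemma phi_add: "phi N v (p + q) = phi N v p + phi N v q"
proof -
  let ?A = "Poly_Mapping.keys p \<union> Poly_Mapping.keys q"
  have "phi N v (p + q) = (\<Sum>a\<in>?A. if N a = v then Poly_Mapping.lookup (p+q) a else 0)"
    by (rule phi_superset) (simp, rule keys_add)
  also have "\<dots> = (\<Sum>a\<in>?A. if N a = v then Poly_Mapping.lookup p a else 0) + (\<Sum>a\<in>?A. if N a = v then Poly_Mapping.lookup q a else 0)"
    unfolding sum.distrib[symmetric] by (rule sum.cong) (auto simp: lookup_add)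
  also have "\<dots> = phi N v p + phi N v q"
    by (subst (1 2) phi_superset[of ?A]) auto
  finally show ?thesis .
qed

lemma phi_uminus: "phi N v (- p) = - phi N v p"
  unfolding phi_def by (simp add: sum_negf[symmetric] if_distrib cong: if_cong)

lemma phi_diff: "phi N v (p - q) = phi N v p - phi N v q"
  using phi_add[of N v p "-q"] phi_uminus[of N v q] by simp

lemma phi_zero: "phi N v 0 = 0"
  unfolding phi_def by simp

lemma phi_sum: "phi N v (sum t F) = (\<Sum>g\<in>F. phi N v (t g))"
  by (induction F rule: infinite_finite_induct) (auto simp: phi_zero phi_add)

lemma phi_single: "phi N v (Poly_Mapping.single a c) = (if N a = v then c else 0)"
  unfolding phi_def by simp

lemma poly_expand: "p = (\<Sum>h\<in>Poly_Mapping.keys p. Poly_Mapping.single h (Poly_Mapping.lookup p h))"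
  by (rule poly_mapping_eqI) (simp add: lookup_sum lookup_single when_def in_keys_iff)

lemma phi_mult_binom:
  assumes "\<And>h. N (h + A) = N (h + B)"
  shows "phi N v (c * (Poly_Mapping.single A 1 - Poly_Mapping.single B (1::'a::field))) = 0"
proof -
  have "c * (Poly_Mapping.single A 1 - Poly_Mapping.single B 1) =
     (\<Sum>h\<in>Poly_Mapping.keys c. Poly_Mapping.single (h + A) (Poly_Mapping.lookup c h) - Poly_Mapping.single (h + B) (Poly_Mapping.lookup c h))"
    by (subst poly_expand[of c]) (simp add: sum_distrib_right right_diff_distrib mult_single sum_subtractf)
  then show ?thesis by (simp add: phi_sum phi_diff phi_single assms)
qed




definition greedy :: "(nat \<Rightarrow> nat) \<Rightarrow> nat \<Rightarrow> nat \<Rightarrow> nat" where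
  "greedy S X j = min (S j) (X - sum S {2..<j})"

lemma greedy_prefix: "sum (greedy S X) {2..<2+n} = min X (sum S {2..<2+n})"
proof (induction n)
  case 0 then show ?case by simp
next
  case (Suc n)
  have "sum (greedy S X) {2..<2+Suc n} = sum (greedy S X) {2..<2+n} + greedy S X (2+n)" by simp
  also have "\<dots> = min X (sum S {2..<2+n}) + min (S (2+n)) (X - sum S {2..<2+n})"
    using Suc by (simp add: greedy_def)
  also have "\<dots> = min X (sum S {2..<2+n} + S (2+n))" by simp
  also have "\<dots> = min X (sum S {2..<2+Suc n})" by simp
  finally show ?case .
qed

lemma greedy_prefix': "2 \<le> j \<Longrightarrow> sum (greedy S X) {2..<j} = min X (sum S {2..<j})"
proof -
  assume "2 \<le> j"
  then have "j = 2 + (j - 2)" by simp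
  then show ?thesis using greedy_prefix[of S X "j - 2"] by metis
qed

lemma greedy_le: "greedy S X j \<le> S j"
  by (simp add: greedy_def)

lemma greedy_total:
  assumes "\<And>i. i \<in> {2..<k} \<Longrightarrow> Q i \<le> S i" "sum Q {2..<k} = X" "2 \<le> k"
  shows "sum (greedy S X) {2..<k} = X"
proof -
  have "X \<le> sum S {2..<k}" using assms(1,2) sum_mono by metis
  then show ?thesis using greedy_prefix'[OF assms(3)] by simp
qed

lemma greedy_first_diff:
  assumes "\<And>i. i \<in> {2..<k} \<Longrightarrow> Q i \<le> S i" "sum Q {2..<k} = X"
    and "2 \<le> j" "j < k" "\<And>i. i \<in> {2..<j} \<Longrightarrow> greedy S X i = Q i" "greedy S X j \<noteq> Q j"
  shows "Q j < greedy S X j"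
proof -
  let ?A = "sum S {2..<j}"
  have eq: "sum Q {2..<j} = min X ?A"
    using greedy_prefix'[OF assms(3), of S X] assms(5) by (metis sum.cong)
  have "sum Q {2..<j} + Q j = sum Q {2..<Suc j}" using assms(3) by simp
  also have "\<dots> \<le> sum Q {2..<k}" using assms(4) by (intro sum_mono2) auto
  finally have le: "sum Q {2..<j} + Q j \<le> X" using assms(2) by simp
  show ?thesis
  proof (cases "?A \<le> X")
    case True
    then have "Q j \<le> X - ?A" using eq le by simp
    moreover have "Q j \<le> S j" using assms(1,3,4) by simp
    ultimately have "Q j \<le> greedy S X j" by (simp add: greedy_def)
    then show ?thesis using assms(6) by simp
  next
    case False
    then have "Q j = 0" using eq le by simp
    moreover have "greedy S X j = 0" using False by (simp add: greedy_def)
    ultimately show ?thesis using assms(6) by simp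
  qed
qed




lemma lookup_single_if: "Poly_Mapping.lookup (Poly_Mapping.single k v) k' = (if k = k' then v else 0)"
  by (simp add: lookup_single when_def)

locale bino =
  fixes m :: nat and d :: "nat \<Rightarrow> nat"
  assumes m2: "2 \<le> m" and dpos: "\<forall>i\<in>{1..m}. d i > 0"
begin

definition "EE w = Poly_Mapping.lookup (w::monom) 0 div d 1"
definition "FF w = Poly_Mapping.lookup (w::monom) m div d 1"
definition "PP w j = Poly_Mapping.lookup (w::monom) (j-1) div d j"
definition "QQ w j = Poly_Mapping.lookup (w::monom) (m+j-1) div d j"
definition "Qt w = sum (QQ w) {2..<m+1}"
definition "SS w j = PP w j + QQ w j"
definition "E2 w = EE w - Qt w"
definition "Qt2 w = Qt w - EE w"
definition "F2 w = EE w + FF w - E2 w"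
definition "Q2 w j = greedy (SS w) (Qt2 w) j"
definition "P2 w j = SS w j - Q2 w j"

definition nfl :: "monom \<Rightarrow> nat \<Rightarrow> nat" where
 "nfl w v = (if EE w + FF w = 0 then Poly_Mapping.lookup w v
   else if v = 0 then E2 w * d 1 + Poly_Mapping.lookup w 0 mod d 1
   else if v = m then F2 w * d 1 + Poly_Mapping.lookup w m mod d 1
   else if v < m then P2 w (v+1) * d (v+1) + Poly_Mapping.lookup w v mod d (v+1)
   else if v < 2*m then Q2 w (v+1-m) * d (v+1-m) + Poly_Mapping.lookup w v mod d (v+1-m)
   else Poly_Mapping.lookup w v)"

lemma nfl_nz: "EE w + FF w \<noteq> 0 \<Longrightarrow> nfl w v = (if v = 0 then E2 w * d 1 + Poly_Mapping.lookup w 0 mod d 1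
   else if v = m then F2 w * d 1 + Poly_Mapping.lookup w m mod d 1
   else if v < m then P2 w (v+1) * d (v+1) + Poly_Mapping.lookup w v mod d (v+1)
   else if v < 2*m then Q2 w (v+1-m) * d (v+1-m) + Poly_Mapping.lookup w v mod d (v+1-m)
   else Poly_Mapping.lookup w v)"
  unfolding nfl_def by presburger

definition nf :: "monom \<Rightarrow> monom" where
  "nf w = Abs_poly_mapping (nfl w)"

lemma lookup_nf: "Poly_Mapping.lookup (nf w) = nfl w"
proof -
  have "{v. nfl w v \<noteq> 0} \<subseteq> Poly_Mapping.keys w \<union> {..<2*m}"
  proof
    fix v assume "v \<in> {v. nfl w v \<noteq> 0}"
    then have "nfl w v \<noteq> 0" by simp
    then show "v \<in> Poly_Mapping.keys w \<union> {..<2*m}"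
    proof (cases "v < 2*m")
      case False
      then have "nfl w v = Poly_Mapping.lookup w v" using m2 by (simp add: nfl_def)
      then show ?thesis using \<open>nfl w v \<noteq> 0\<close> by (simp add: in_keys_iff)
    qed simp
  qed
  then have "finite {v. nfl w v \<noteq> 0}" by (rule finite_subset) simp
  then show ?thesis by (simp add: nf_def)
qed

definition "Am j = Poly_Mapping.single 0 (d 1) + Poly_Mapping.single (m+j-1) (d j)"
definition "Bm j = Poly_Mapping.single (j-1) (d j) + Poly_Mapping.single m (d 1)"

lemma d1: "d 1 > 0" using dpos m2 by auto
lemma dj: "j \<in> {2..m} \<Longrightarrow> d j > 0" using dpos by auto

lemma nf_inv:
  assumes j: "j \<in> {2..m}"
  shows "nf (h + Am j) = nf (h + Bm j)"
proof -
  let ?w = "h + Am j" and ?w' = "h + Bm j"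
  have lw: "Poly_Mapping.lookup ?w v = Poly_Mapping.lookup h v + (if v = 0 then d 1 else 0) + (if v = m+j-1 then d j else 0)" for v
    using j by (simp add: Am_def lookup_add lookup_single_if)
  have lw': "Poly_Mapping.lookup ?w' v = Poly_Mapping.lookup h v + (if v = j-1 then d j else 0) + (if v = m then d 1 else 0)" for v
    using j by (simp add: Bm_def lookup_add lookup_single_if)
  have d1: "d 1 > 0" by (rule d1)
  have dj: "d j > 0" using j by (rule dj)
  have E: "EE ?w = EE h + 1" "EE ?w' = EE h"
    using j m2 d1 by (auto simp: EE_def lw lw' div_add_self2)
  have F: "FF ?w = FF h" "FF ?w' = FF h + 1"
    using j m2 d1 by (auto simp: FF_def lw lw' div_add_self2)
  have P: "PP ?w i = PP h i" "PP ?w' i = PP h i + (if i = j then 1 else 0)" if "i \<in> {2..m}" for i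
    using j m2 dj that by (auto simp: PP_def lw lw' div_add_self2)
  have Q: "QQ ?w i = QQ h i + (if i = j then 1 else 0)" "QQ ?w' i = QQ h i" if "i \<in> {2..m}" for i
    using j m2 dj that by (auto simp: QQ_def lw lw' div_add_self2)
  have Qt: "Qt ?w = Qt h + 1" "Qt ?w' = Qt h"
  proof -
    have "Qt ?w = (\<Sum>i\<in>{2..<m+1}. QQ h i + (if i = j then 1 else 0))"
      unfolding Qt_def by (rule sum.cong) (auto simp: Q)
    also have "\<dots> = Qt h + 1" using j by (simp add: sum.distrib Qt_def)
    finally show "Qt ?w = Qt h + 1" .
    show "Qt ?w' = Qt h" unfolding Qt_def by (rule sum.cong) (auto simp: Q)
  qed
  have S: "SS ?w i = SS ?w' i" if "i \<in> {2..m}" for i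
    using that by (simp add: SS_def P Q)
  have E2: "E2 ?w = E2 ?w'" and Qt2: "Qt2 ?w = Qt2 ?w'" and F2: "F2 ?w = F2 ?w'"
    by (simp_all add: E2_def Qt2_def F2_def E Qt F)
  have Q2: "Q2 ?w i = Q2 ?w' i" if "i \<in> {2..m}" for i
  proof -
    have "sum (SS ?w) {2..<i} = sum (SS ?w') {2..<i}" using that by (intro sum.cong) (auto simp: S)
    then show ?thesis using that by (simp add: Q2_def greedy_def S Qt2)
  qed
  have P2: "P2 ?w i = P2 ?w' i" if "i \<in> {2..m}" for i
    using that by (simp add: P2_def Q2 S)
  have "nfl ?w v = nfl ?w' v" for v
  proof -
    have nz: "EE ?w + FF ?w \<noteq> 0" "EE ?w' + FF ?w' \<noteq> 0" using E F by auto
    consider "v = 0" | "v = m" | "0 < v" "v < m" | "m < v" "v < 2*m" | "2*m \<le> v" by linarith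
    then show ?thesis
    proof cases
      case 1 then show ?thesis using nz j m2 by (simp add: nfl_nz[OF nz(1)] nfl_nz[OF nz(2)] E2 lw lw')
    next
      case 2
      have "m \<noteq> m + j - 1" "m \<noteq> j - 1" "m \<noteq> 0" using j m2 by auto
      then show ?thesis using nz j m2 2 by (simp add: nfl_nz[OF nz(1)] nfl_nz[OF nz(2)] F2 lw lw')
    next
      case 3
      then have i: "v + 1 \<in> {2..m}" by auto
      have "Poly_Mapping.lookup ?w v mod d (v+1) = Poly_Mapping.lookup ?w' v mod d (v+1)"
        using 3 j by (auto simp: lw lw')
      then show ?thesis using 3 nz P2[OF i] by (simp add: nfl_nz[OF nz(1)] nfl_nz[OF nz(2)])
    next
      case 4
      then have i: "v + 1 - m \<in> {2..m}" by auto
      have "Poly_Mapping.lookup ?w v mod d (v+1-m) = Poly_Mapping.lookup ?w' v mod d (v+1-m)"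
        using 4 j by (auto simp: lw lw')
      then show ?thesis using 4 nz Q2[OF i] by (simp add: nfl_nz[OF nz(1)] nfl_nz[OF nz(2)])
    next
      case 5
      have "v \<noteq> m + j - 1" "v \<noteq> j - 1" "v \<noteq> m" "v \<noteq> 0" "\<not> v < 2*m" using 5 j m2 by auto
      then show ?thesis using nz j m2 by (simp add: nfl_nz[OF nz(1)] nfl_nz[OF nz(2)] lw lw')
    qed
  qed
  then show ?thesis unfolding nf_def by presburger
qed

end



context bino begin

lemma div_mult_mod_nat: "(a::nat) div b * b + a mod b = a" by simp

lemma nf_id_gen:
  assumes E: "E2 w = EE w" and Q: "\<forall>j\<in>{2..m}. Q2 w j = QQ w j"
  shows "nfl w = Poly_Mapping.lookup w"
proof
  fix v
  show "nfl w v = Poly_Mapping.lookup w v"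
  proof (cases "EE w + FF w = 0")
    case True then show ?thesis by (simp add: nfl_def)
  next
    case nz: False
    have F: "F2 w = FF w" using E by (simp add: F2_def)
    consider "v = 0" | "v = m" | "0 < v" "v < m" | "m < v" "v < 2*m" | "2*m \<le> v" by linarith
    then show ?thesis
    proof cases
      case 1 then show ?thesis using nz by (simp add: nfl_nz[OF nz] E EE_def)
    next
      case 2 then show ?thesis using nz m2 by (simp add: nfl_nz[OF nz] F FF_def)
    next
      case 3
      then have i: "v + 1 \<in> {2..m}" by auto
      then have "P2 w (v+1) = PP w (v+1)" using Q by (simp add: P2_def SS_def)
      then show ?thesis using 3 nz by (simp add: nfl_nz[OF nz] PP_def)
    next
      case 4
      then have i: "v + 1 - m \<in> {2..m}" by auto
      have "m + (v + 1 - m) - 1 = v" using 4 by simp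
      then show ?thesis using 4 nz Q i by (simp add: nfl_nz[OF nz] QQ_def)
    next
      case 5 then show ?thesis using nz m2 by (simp add: nfl_nz[OF nz])
    qed
  qed
qed

lemma nf_id_gen': "E2 w = EE w \<Longrightarrow> \<forall>j\<in>{2..m}. Q2 w j = QQ w j \<Longrightarrow> nf w = w"
  using nf_id_gen by (simp add: nf_def)

lemma Qt0_Q: "Qt w = 0 \<Longrightarrow> j \<in> {2..m} \<Longrightarrow> QQ w j = 0"
  unfolding Qt_def by auto

lemma Qt0_Q2: "Qt w = 0 \<Longrightarrow> Q2 w j = 0"
  by (simp add: Q2_def greedy_def Qt2_def)

lemma QQ_le_SS: "QQ w i \<le> SS w i" by (simp add: SS_def)

definition std :: "monom \<Rightarrow> bool" where
  "std w \<longleftrightarrow> \<not>(\<exists>j\<in>{2..m}. d 1 \<le> Poly_Mapping.lookup w 0 \<and> d j \<le> Poly_Mapping.lookup w (m+j-1))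
     \<and> \<not>(\<exists>i j. 2 \<le> i \<and> i < j \<and> j \<le> m \<and> d 1 \<le> Poly_Mapping.lookup w m \<and> d i \<le> Poly_Mapping.lookup w (i-1)
            \<and> d j \<le> Poly_Mapping.lookup w (m+j-1))"

lemma exists_first_diff:
  assumes "\<not>(\<forall>j\<in>{2..m}. Q2 w j = QQ w j)"
  obtains j0 where "j0 \<in> {2..m}" "Q2 w j0 \<noteq> QQ w j0" "\<And>i. i \<in> {2..<j0} \<Longrightarrow> Q2 w i = QQ w i"
proof -
  from assms obtain j where "j \<in> {2..m} \<and> Q2 w j \<noteq> QQ w j" by blast
  then obtain j0 where "j0 \<in> {2..m} \<and> Q2 w j0 \<noteq> QQ w j0" "\<And>i. i < j0 \<Longrightarrow> \<not>(i \<in> {2..m} \<and> Q2 w i \<noteq> QQ w i)"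
    using exists_least_iff[of "\<lambda>j. j \<in> {2..m} \<and> Q2 w j \<noteq> QQ w j"] by blast
  then show ?thesis using that by fastforce
qed

lemma first_diff_lt:
  assumes "EE w = 0" "j0 \<in> {2..m}" "Q2 w j0 \<noteq> QQ w j0" "\<And>i. i \<in> {2..<j0} \<Longrightarrow> Q2 w i = QQ w i"
  shows "QQ w j0 < Q2 w j0"
proof -
  have X: "Qt2 w = Qt w" using assms(1) by (simp add: Qt2_def)
  show ?thesis unfolding Q2_def
    apply (rule greedy_first_diff[where k = "m+1"])
    using assms X by (auto simp: QQ_le_SS Qt_def Q2_def)
qed

lemma Q2_total: assumes "EE w = 0" shows "sum (Q2 w) {2..<m+1} = Qt w"
proof -
  have X: "Qt2 w = Qt w" using assms by (simp add: Qt2_def)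
  have "sum (greedy (SS w) (Qt w)) {2..<m+1} = Qt w"
    by (rule greedy_total[where Q="QQ w"]) (use m2 in \<open>auto simp: QQ_le_SS Qt_def\<close>)
  then show ?thesis by (simp add: Q2_def X)
qed

lemma nf_zero: "EE w + FF w = 0 \<Longrightarrow> nf w = w"
  by (rule poly_mapping_eqI) (simp add: lookup_nf nfl_def)

lemma std_nf: assumes "std w" shows "nf w = w"
proof (cases "Qt w = 0")
  case True
  then show ?thesis by (intro nf_id_gen') (auto simp: E2_def Qt0_Q Qt0_Q2)
next
  case False
  then obtain j where j: "j \<in> {2..<m+1}" "QQ w j \<noteq> 0" unfolding Qt_def by (meson sum.neutral)
  then have "d j \<le> Poly_Mapping.lookup w (m+j-1)" by (auto simp: QQ_def div_greater_zero_iff)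
  with assms j have "Poly_Mapping.lookup w 0 < d 1" by (auto simp: std_def)
  then have E0: "EE w = 0" by (simp add: EE_def)
  show ?thesis
  proof (cases "EE w + FF w = 0")
    case True
    then show ?thesis by (simp add: nf_zero)
  next
    case nz: False
    then have "FF w \<noteq> 0" using E0 by simp
    then have Fge: "d 1 \<le> Poly_Mapping.lookup w m" by (auto simp: FF_def div_greater_zero_iff)
    have "\<forall>j\<in>{2..m}. Q2 w j = QQ w j"
    proof (rule ccontr)
      assume nq: "\<not> (\<forall>j\<in>{2..m}. Q2 w j = QQ w j)"
      obtain j0 where j0: "j0 \<in> {2..m}" "Q2 w j0 \<noteq> QQ w j0" "\<And>i. i \<in> {2..<j0} \<Longrightarrow> Q2 w i = QQ w i"
        using exists_first_diff[OF nq] by metis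
      have lt: "QQ w j0 < Q2 w j0" by (rule first_diff_lt[OF E0 j0])
      then have "PP w j0 \<noteq> 0" using greedy_le[of "SS w" "Qt2 w" j0] by (simp add: Q2_def SS_def)
      then have Pge: "d j0 \<le> Poly_Mapping.lookup w (j0-1)" by (auto simp: PP_def div_greater_zero_iff)
      have zero: "QQ w i = 0" if "i \<in> {Suc j0..<m+1}" for i
      proof (rule ccontr)
        assume "QQ w i \<noteq> 0"
        then have "d i \<le> Poly_Mapping.lookup w (m+i-1)" by (auto simp: QQ_def div_greater_zero_iff)
        with assms Fge Pge j0(1) that show False unfolding std_def by force
      qed
      have "Qt w = sum (QQ w) {2..<j0} + QQ w j0 + sum (QQ w) {Suc j0..<m+1}"
      proof -
        have "sum (QQ w) {2..<m+1} = sum (QQ w) {2..<Suc j0} + sum (QQ w) {Suc j0..<m+1}"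
          by (rule sum.atLeastLessThan_concat[symmetric]) (use j0(1) in auto)
        moreover have "sum (QQ w) {2..<Suc j0} = sum (QQ w) {2..<j0} + QQ w j0" using j0(1) by simp
        ultimately show ?thesis unfolding Qt_def by simp
      qed
      also have "\<dots> = sum (Q2 w) {2..<j0} + QQ w j0" using zero j0(3) by simp
      also have "\<dots> < sum (Q2 w) {2..<j0} + Q2 w j0" using lt by simp
      also have "\<dots> = sum (Q2 w) {2..<Suc j0}" using j0(1) by simp
      also have "\<dots> \<le> sum (Q2 w) {2..<m+1}" using j0(1) by (intro sum_mono2) auto
      also have "\<dots> = Qt w" by (rule Q2_total[OF E0])
      finally show False by simp
    qed
    then show ?thesis by (intro nf_id_gen') (auto simp: E2_def E0)
  qed
qed

lemma less_at:
  fixes a b :: monom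
  assumes "\<And>v. v < k \<Longrightarrow> Poly_Mapping.lookup a v = Poly_Mapping.lookup b v"
    and "Poly_Mapping.lookup a k < Poly_Mapping.lookup b k"
  shows "a < b"
  unfolding less_poly_mapping.rep_eq less_fun_def using assms by blast

lemma nf_le: "nf w \<le> w"
proof (cases "EE w + FF w = 0")
  case True
  then show ?thesis by (simp add: nf_zero)
next
  case nz: False
  have d1: "d 1 > 0" by (rule d1)
  show ?thesis
  proof (cases "E2 w < EE w")
    case True
    have "Poly_Mapping.lookup (nf w) 0 < Poly_Mapping.lookup w 0"
    proof -
      have "E2 w * d 1 < EE w * d 1" using True d1 by simp
      moreover have "Poly_Mapping.lookup w 0 = EE w * d 1 + Poly_Mapping.lookup w 0 mod d 1"
        by (simp add: EE_def)
      moreover have "Poly_Mapping.lookup (nf w) 0 = E2 w * d 1 + Poly_Mapping.lookup w 0 mod d 1"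
        by (simp add: lookup_nf nfl_nz[OF nz])
      ultimately show ?thesis by linarith
    qed
    then have "nf w < w" by (intro less_at[of 0]) auto
    then show ?thesis by simp
  next
    case False
    then have E2: "E2 w = EE w" by (simp add: E2_def)
    show ?thesis
    proof (cases "\<forall>j\<in>{2..m}. Q2 w j = QQ w j")
      case True then show ?thesis using nf_id_gen'[OF E2] by simp
    next
      case False
      then obtain j0 where j0: "j0 \<in> {2..m}" "Q2 w j0 \<noteq> QQ w j0" "\<And>i. i \<in> {2..<j0} \<Longrightarrow> Q2 w i = QQ w i"
        using exists_first_diff by metis
      have E0: "EE w = 0"
      proof (rule ccontr)
        assume "EE w \<noteq> 0"
        then have "Qt w = 0" using E2 by (simp add: E2_def)
        then show False using j0(1,2) Qt0_Q Qt0_Q2 by metis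
      qed
      have lt: "QQ w j0 < Q2 w j0" by (rule first_diff_lt[OF E0 j0])
      have P2lt: "P2 w j0 < PP w j0"
        using lt greedy_le[of "SS w" "Qt2 w" j0] by (simp add: P2_def Q2_def SS_def)
      have dj0: "d j0 > 0" using j0(1) by (rule dj)
      have "Poly_Mapping.lookup (nf w) (j0 - 1) < Poly_Mapping.lookup w (j0 - 1)"
      proof -
        have "P2 w j0 * d j0 < PP w j0 * d j0" using P2lt dj0 by simp
        moreover have "j0 - 1 \<noteq> 0" "j0 - 1 \<noteq> m" "j0 - 1 < m" "j0 - 1 + 1 = j0" using j0(1) by auto
        ultimately have a: "Poly_Mapping.lookup (nf w) (j0 - 1) = P2 w j0 * d j0 + Poly_Mapping.lookup w (j0-1) mod d j0"
          by (simp add: lookup_nf nfl_nz[OF nz])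
        have b: "Poly_Mapping.lookup w (j0-1) = PP w j0 * d j0 + Poly_Mapping.lookup w (j0-1) mod d j0"
          unfolding PP_def by (rule div_mult_mod_eq[symmetric])
        note a b \<open>P2 w j0 * d j0 < PP w j0 * d j0\<close>
        then show ?thesis by linarith
      qed
      moreover have "Poly_Mapping.lookup (nf w) v = Poly_Mapping.lookup w v" if "v < j0 - 1" for v
      proof (cases "v = 0")
        case True then show ?thesis using nz E2 by (simp add: lookup_nf nfl_nz[OF nz] EE_def)
      next
        case False
        then have i: "v + 1 \<in> {2..<j0}" using that by auto
        then have "P2 w (v+1) = PP w (v+1)" using j0(3) by (simp add: P2_def SS_def)
        moreover have "v \<noteq> m" "v < m" using that j0(1) by auto
        ultimately show ?thesis using nz False by (simp add: lookup_nf nfl_nz[OF nz] PP_def)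
      qed
      ultimately have "nf w < w" by (intro less_at[of "j0 - 1"]) auto
      then show ?thesis by simp
    qed
  qed
qed

end



lemma lead_binom:
  fixes A B :: monom
  assumes "B < A"
  shows "lead_monom (Poly_Mapping.single A 1 - Poly_Mapping.single B (1::'a::field)) = A"
    and "Poly_Mapping.single A 1 - Poly_Mapping.single B (1::'a::field) \<noteq> 0"
proof -
  have ne: "A \<noteq> B" using assms by simp
  have k: "Poly_Mapping.keys (Poly_Mapping.single A 1 - Poly_Mapping.single B (1::'a)) = {A, B}"
    using ne by (auto simp: in_keys_iff lookup_minus lookup_single_if split: if_splits)
  show "lead_monom (Poly_Mapping.single A 1 - Poly_Mapping.single B (1::'a::field)) = A"
    unfolding lead_monom_def k using assms by (auto simp: max_def dest: leD)
  show "Poly_Mapping.single A 1 - Poly_Mapping.single B (1::'a::field) \<noteq> 0"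
    using k by (metis insert_not_empty keys_eq_empty)
qed

lemma single_mult_binom:
  "Poly_Mapping.single a (1::'a::field) * (Poly_Mapping.single b 1 - Poly_Mapping.single c 1)
    = Poly_Mapping.single (a + b) 1 - Poly_Mapping.single (a + c) 1"
  by (simp add: right_diff_distrib mult_single)

lemma divides_monom:
  fixes A w :: monom
  assumes "\<And>v. Poly_Mapping.lookup A v \<le> Poly_Mapping.lookup w v"
  shows "w = (w - A) + A" "Poly_Mapping.keys (w - A) \<subseteq> Poly_Mapping.keys w"
proof -
  show "w = (w - A) + A"
    by (rule poly_mapping_eqI) (simp add: lookup_add lookup_minus assms)
  show "Poly_Mapping.keys (w - A) \<subseteq> Poly_Mapping.keys w"
    by (auto simp: in_keys_iff lookup_minus)
qed

lemma keys_single_monom: "Poly_Mapping.keys (Poly_Mapping.single (k::nat) (a::nat)) \<subseteq> {k}"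
  by simp

context bino begin

lemma lookup_Am: "Poly_Mapping.lookup (Am j) v = (if v = 0 then d 1 else 0) + (if v = m+j-1 then d j else 0)"
  by (simp add: Am_def lookup_add lookup_single_if)

lemma lookup_Bm: "Poly_Mapping.lookup (Bm j) v = (if v = j-1 then d j else 0) + (if v = m then d 1 else 0)"
  by (simp add: Bm_def lookup_add lookup_single_if)

lemma fbin_eq: "fbin m d 1 j = Poly_Mapping.single (Am j) 1 - Poly_Mapping.single (Bm j) 1"
  by (simp add: fbin_def xy_mon_def xvar_def yvar_def Am_def Bm_def)

lemma Bm_less: assumes "j \<in> {2..m}" shows "Bm j < Am j"
proof (rule less_at[of 0])
  show "Poly_Mapping.lookup (Bm j) 0 < Poly_Mapping.lookup (Am j) 0"
    using assms m2 d1 by (simp add: lookup_Am lookup_Bm)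
qed simp

definition "Cm i j = Poly_Mapping.single m (d 1) + (Poly_Mapping.single (i-1) (d i) + Poly_Mapping.single (m+j-1) (d j))"
definition "Dm i j = Poly_Mapping.single m (d 1) + (Poly_Mapping.single (j-1) (d j) + Poly_Mapping.single (m+i-1) (d i))"

lemma lookup_Cm: "Poly_Mapping.lookup (Cm i j) v = (if v = m then d 1 else 0) + (if v = i-1 then d i else 0) + (if v = m+j-1 then d j else 0)"
  by (simp add: Cm_def lookup_add lookup_single_if)

lemma lookup_Dm: "Poly_Mapping.lookup (Dm i j) v = (if v = m then d 1 else 0) + (if v = j-1 then d j else 0) + (if v = m+i-1 then d i else 0)"
  by (simp add: Dm_def lookup_add lookup_single_if)

lemma gbin_eq: "y_pow m 1 (d 1) * fbin m d i j = Poly_Mapping.single (Cm i j) 1 - Poly_Mapping.single (Dm i j) 1"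
  by (simp add: fbin_def xy_mon_def xvar_def yvar_def y_pow_def Cm_def Dm_def single_mult_binom)

lemma Dm_less: assumes "2 \<le> i" "i < j" "j \<le> m" shows "Dm i j < Cm i j"
proof (rule less_at[of "i-1"])
  show "Poly_Mapping.lookup (Dm i j) (i-1) < Poly_Mapping.lookup (Cm i j) (i-1)"
    using assms dpos by (auto simp: lookup_Cm lookup_Dm)
  fix v assume "v < i - 1"
  then show "Poly_Mapping.lookup (Dm i j) v = Poly_Mapping.lookup (Cm i j) v"
    using assms by (auto simp: lookup_Cm lookup_Dm)
qed

lemma keys_Am: "j \<in> {2..m} \<Longrightarrow> Poly_Mapping.keys (Am j) \<subseteq> {..<2*m}"
  by (auto simp: in_keys_iff lookup_Am split: if_splits)

lemma keys_Bm: "j \<in> {2..m} \<Longrightarrow> Poly_Mapping.keys (Bm j) \<subseteq> {..<2*m}"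
  using m2 by (auto simp: in_keys_iff lookup_Bm split: if_splits)

lemma fbin_polyring: "j \<in> {2..m} \<Longrightarrow> fbin m d 1 j \<in> polyring m"
  unfolding fbin_eq diff_conv_add_uminus
  by (intro polyring_add polyring_uminus polyring_single keys_Am keys_Bm)

lemma y_pow_polyring: "i \<in> {1..m} \<Longrightarrow> y_pow m i (d i) \<in> polyring m"
  unfolding y_pow_def by (intro polyring_single) (auto simp: yvar_def)

lemma one_polyring: "1 \<in> polyring m"
  by (simp add: polyring_def)

end



context bino begin

lemma g_identity:
  assumes "2 \<le> i" "i < j" "j \<le> m"
  shows "y_pow m 1 (d 1) * fbin m d i j
       = y_pow m i (d i) * fbin m d 1 j + (- y_pow m j (d j)) * (fbin m d 1 i :: ('a::field) mpoly)"
proof -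
  define Yi where "Yi = Poly_Mapping.single (m+i-1) (d i)"
  define Yj where "Yj = Poly_Mapping.single (m+j-1) (d j)"
  have yi: "y_pow m i (d i) = Poly_Mapping.single Yi (1::'a)" by (simp add: y_pow_def yvar_def Yi_def)
  have yj: "y_pow m j (d j) = Poly_Mapping.single Yj (1::'a)" by (simp add: y_pow_def yvar_def Yj_def)
  have e1: "Yi + Am j = Yj + Am i"
    by (rule poly_mapping_eqI) (simp add: Yi_def Yj_def lookup_add lookup_single_if lookup_Am)
  have e2: "Yj + Bm i = Cm i j"
    by (rule poly_mapping_eqI) (simp add: Yj_def lookup_add lookup_single_if lookup_Bm lookup_Cm)
  have e3: "Yi + Bm j = Dm i j"
    by (rule poly_mapping_eqI) (simp add: Yi_def lookup_add lookup_single_if lookup_Bm lookup_Dm)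
  have "y_pow m i (d i) * fbin m d 1 j + (- y_pow m j (d j)) * (fbin m d 1 i :: 'a mpoly)
      = (Poly_Mapping.single (Yi + Am j) 1 - Poly_Mapping.single (Yi + Bm j) 1)
        - (Poly_Mapping.single (Yj + Am i) 1 - Poly_Mapping.single (Yj + Bm i) 1)"
    unfolding yi yj fbin_eq by (simp add: single_mult_binom)
  also have "\<dots> = Poly_Mapping.single (Cm i j) 1 - Poly_Mapping.single (Dm i j) 1"
    unfolding e1 e2 e3 by simp
  also have "\<dots> = y_pow m 1 (d 1) * fbin m d i j" by (rule gbin_eq[symmetric])
  finally show ?thesis by simp
qed

lemma FS_polyring: "{fbin m d 1 j | j. 2 \<le> j \<and> j \<le> m} \<subseteq> (polyring m :: ('a::field) mpoly set)"
  using fbin_polyring by auto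

lemma I_polyring: "ideal_gen m {fbin m d 1 j | j. 2 \<le> j \<and> j \<le> m} \<subseteq> (polyring m :: ('a::field) mpoly set)"
  by (rule ideal_gen_polyring[OF FS_polyring])

lemma G_sub_I:
  "{fbin m d 1 j | j. 2 \<le> j \<and> j \<le> m}
     \<union> {y_pow m 1 (d 1) * fbin m d i j | i j. 2 \<le> i \<and> i < j \<and> j \<le> m}
   \<subseteq> (ideal_gen m {fbin m d 1 j | j. 2 \<le> j \<and> j \<le> m} :: ('a::field) mpoly set)"
proof
  fix g :: "'a mpoly"
  let ?FS = "{fbin m d 1 j | j. 2 \<le> j \<and> j \<le> m} :: 'a mpoly set"
  assume "g \<in> ?FS \<union> {y_pow m 1 (d 1) * fbin m d i j | i j. 2 \<le> i \<and> i < j \<and> j \<le> m}"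
  then show "g \<in> ideal_gen m ?FS"
  proof
    assume "g \<in> ?FS"
    then have "1 * g \<in> ideal_gen m ?FS" by (intro ideal_gen_base one_polyring)
    then show ?thesis by simp
  next
    assume "g \<in> {y_pow m 1 (d 1) * fbin m d i j | i j. 2 \<le> i \<and> i < j \<and> j \<le> m}"
    then obtain i j where ij: "2 \<le> i" "i < j" "j \<le> m" and g: "g = y_pow m 1 (d 1) * fbin m d i j" by blast
    have "y_pow m i (d i) * fbin m d 1 j + (- y_pow m j (d j)) * (fbin m d 1 i :: 'a mpoly) \<in> ideal_gen m ?FS"
      using ij by (intro ideal_gen_add ideal_gen_base polyring_uminus y_pow_polyring) auto
    then show ?thesis unfolding g g_identity[OF ij] .
  qed
qed

lemma phi_I:
  assumes "p \<in> (ideal_gen m {fbin m d 1 j | j. 2 \<le> j \<and> j \<le> m} :: ('a::field) mpoly set)"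
  shows "phi nf v p = 0"
proof -
  from assms obtain F c where F: "finite F" "F \<subseteq> {fbin m d 1 j | j. 2 \<le> j \<and> j \<le> m}" "p = (\<Sum>g\<in>F. c g * g)"
    unfolding ideal_gen_def by blast
  have "phi nf v (c g * g) = 0" if "g \<in> F" for g
  proof -
    from that F(2) obtain j where j: "j \<in> {2..m}" "g = fbin m d 1 j" by auto
    show ?thesis unfolding j(2) fbin_eq
      by (rule phi_mult_binom) (rule nf_inv[OF j(1)])
  qed
  then show ?thesis unfolding F(3) phi_sum by simp
qed

lemma nonstd:
  assumes "p \<in> (ideal_gen m {fbin m d 1 j | j. 2 \<le> j \<and> j \<le> m} :: ('a::field) mpoly set)" "p \<noteq> 0"
  shows "\<not> std (lead_monom p)"
proof
  assume s: "std (lead_monom p)"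
  let ?w = "lead_monom p"
  have fin: "finite (Poly_Mapping.keys p)" by simp
  have ne: "Poly_Mapping.keys p \<noteq> {}" using assms(2) by simp
  have win: "?w \<in> Poly_Mapping.keys p" unfolding lead_monom_def using fin ne by (rule Max_in)
  have wge: "a \<le> ?w" if "a \<in> Poly_Mapping.keys p" for a unfolding lead_monom_def using fin that by (rule Max_ge)
  have "phi nf ?w p = (\<Sum>a\<in>Poly_Mapping.keys p. if a = ?w then Poly_Mapping.lookup p a else 0)"
    unfolding phi_def
  proof (rule sum.cong)
    fix a assume a: "a \<in> Poly_Mapping.keys p"
    show "(if nf a = ?w then Poly_Mapping.lookup p a else 0) = (if a = ?w then Poly_Mapping.lookup p a else 0)"
    proof (cases "a = ?w")
      case True then show ?thesis using std_nf[OF s] by simp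
    next
      case False
      then have "a < ?w" using wge[OF a] by simp
      then have "nf a < ?w" using nf_le[of a] by simp
      then have "nf a \<noteq> ?w" by simp
      then show ?thesis using False by simp
    qed
  qed simp
  also have "\<dots> = Poly_Mapping.lookup p ?w" using win fin by simp
  finally have "phi nf ?w p = Poly_Mapping.lookup p ?w" .
  moreover have "Poly_Mapping.lookup p ?w \<noteq> 0" using win by (simp add: in_keys_iff)
  ultimately show False using phi_I[OF assms(1)] by simp
qed

lemma init_in:
  fixes G :: "('a::field) mpoly set"
  defines "G \<equiv> {fbin m d 1 j | j. 2 \<le> j \<and> j \<le> m}
     \<union> {y_pow m 1 (d 1) * fbin m d i j | i j. 2 \<le> i \<and> i < j \<and> j \<le> m}"
  assumes "p \<in> (ideal_gen m {fbin m d 1 j | j. 2 \<le> j \<and> j \<le> m} :: 'a mpoly set)" "p \<noteq> 0"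
  shows "init_term p \<in> ideal_gen m (init_term ` (G - {0}))"
proof -
  let ?w = "lead_monom p"
  have fin: "finite (Poly_Mapping.keys p)" by simp
  have ne: "Poly_Mapping.keys p \<noteq> {}" using assms(3) by simp
  have win: "?w \<in> Poly_Mapping.keys p" unfolding lead_monom_def using fin ne by (rule Max_in)
  have "p \<in> polyring m" using I_polyring assms(2) by blast
  then have wk: "Poly_Mapping.keys ?w \<subseteq> {..<2*m}" using win by (auto simp: polyring_def)
  have key: "\<exists>g A. g \<in> G - {0} \<and> lead_monom g = A \<and> (\<forall>v. Poly_Mapping.lookup A v \<le> Poly_Mapping.lookup ?w v)"
  proof -
    have "\<not> std ?w" by (rule nonstd[OF assms(2,3)])
    then consider (a) j where "j \<in> {2..m}" "d 1 \<le> Poly_Mapping.lookup ?w 0" "d j \<le> Poly_Mapping.lookup ?w (m+j-1)"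
      | (b) i j where "2 \<le> i" "i < j" "j \<le> m" "d 1 \<le> Poly_Mapping.lookup ?w m" "d i \<le> Poly_Mapping.lookup ?w (i-1)"
            "d j \<le> Poly_Mapping.lookup ?w (m+j-1)"
      unfolding std_def by blast
    then show ?thesis
    proof cases
      case a
      have "fbin m d 1 j \<in> G" using a(1) unfolding G_def by auto
      moreover have "fbin m d 1 j \<noteq> (0::'a mpoly)" "lead_monom (fbin m d 1 j :: 'a mpoly) = Am j"
        unfolding fbin_eq using lead_binom[OF Bm_less[OF a(1)]] by auto
      moreover have "\<forall>v. Poly_Mapping.lookup (Am j) v \<le> Poly_Mapping.lookup ?w v"
        using a by (auto simp: lookup_Am)
      ultimately show ?thesis by blast
    next
      case b
      have "y_pow m 1 (d 1) * fbin m d i j \<in> G" using b(1-3) unfolding G_def by blast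
      moreover have "y_pow m 1 (d 1) * fbin m d i j \<noteq> (0::'a mpoly)" "lead_monom (y_pow m 1 (d 1) * fbin m d i j :: 'a mpoly) = Cm i j"
        unfolding gbin_eq using lead_binom[OF Dm_less[OF b(1-3)]] by auto
      moreover have "\<forall>v. Poly_Mapping.lookup (Cm i j) v \<le> Poly_Mapping.lookup ?w v"
        using b by (auto simp: lookup_Cm)
      ultimately show ?thesis by blast
    qed
  qed
  then obtain g A where g: "g \<in> G - {0}" "lead_monom g = A" "\<forall>v. Poly_Mapping.lookup A v \<le> Poly_Mapping.lookup ?w v"
    by blast
  have dv: "?w = (?w - A) + A" "Poly_Mapping.keys (?w - A) \<subseteq> Poly_Mapping.keys ?w"
    using divides_monom[of A ?w] g(3) by auto
  have "init_term p = Poly_Mapping.single (?w - A) 1 * init_term g"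
    unfolding init_term_def g(2) mult_single using dv(1) by simp
  moreover have "Poly_Mapping.single (?w - A) 1 * init_term g \<in> ideal_gen m (init_term ` (G - {0}))"
    by (rule ideal_gen_base) (use g(1) dv(2) wk in \<open>auto intro!: polyring_single\<close>)
  ultimately show ?thesis by simp
qed

end

theorem lemma4p12:
  fixes m :: nat and d :: "nat \<Rightarrow> nat"
  assumes "m \<ge> 2"
    and "\<forall>i\<in>{1..m}. d i > 0"
  shows "is_groebner_basis m
           ({fbin m d 1 j | j. 2 \<le> j \<and> j \<le> m}
            \<union> {y_pow m 1 (d 1) * fbin m d i j | i j. 2 \<le> i \<and> i < j \<and> j \<le> m})
           (ideal_gen m {fbin m d 1 j | j. 2 \<le> j \<and> j \<le> m} :: ('a::field) mpoly set)"
proof -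
  interpret bino m d using assms by unfold_locales
  let ?G = "{fbin m d 1 j | j. 2 \<le> j \<and> j \<le> m}
            \<union> {y_pow m 1 (d 1) * fbin m d i j | i j. 2 \<le> i \<and> i < j \<and> j \<le> m} :: 'a mpoly set"
  let ?I = "ideal_gen m {fbin m d 1 j | j. 2 \<le> j \<and> j \<le> m} :: 'a mpoly set"
  have GI: "?G \<subseteq> ?I" by (rule G_sub_I)
  have "ideal_gen m (init_term ` (?G - {0})) \<subseteq> ideal_gen m (init_term ` (?I - {0}))"
    using GI by (intro ideal_gen_mono) blast
  moreover have "ideal_gen m (init_term ` (?I - {0})) \<subseteq> ideal_gen m (init_term ` (?G - {0}))"
    by (rule ideal_gen_trans) (use init_in in blast)
  ultimately show ?thesis unfolding is_groebner_basis_def using GI by blast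
qed


end
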